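(* Let $0<p<1$ and $\alpha>-1$, and consider the urn transfer process described in the context (the $p_k$-model), assumed well defined, i.e. $0\le p_{k+1}\le1$ at every stage. Let $\beta=\frac{1-p}{1+\alpha p}$ and define $(f_i)_{i\ge1}$ by $$f_1=\frac{p}{1+\beta(1+\alpha)},\qquad f_i=\frac{\beta(i-1+\alpha)}{1+\beta(i+\alpha)}\,f_{i-1}\quad(i>1).$$ Then for every $i\ge1$, $$\lim_{k\to\infty}\frac{E(F_i(k))}{k}=f_i.$$
   Context: Urn transfer model ($p_k$-model). There are countably many urns $urn_1,urn_2,\dots$; each ball in $urn_i$ carries $i$ pins. Let $F_i(k)$ be the number of balls in $urn_i$ after $k$ steps. Initially $F_1(1)=1$ and $F_i(1)=0$ for $i>1$. At stage $k+1$ ($k\ge1$): (i) with probability $$p_{k+1}=1-\frac{(1-p)\sum_{i=1}^k (i+\alpha)F_i(k)}{k(1+\alpha p)+\alpha(1-p)},$$ a new ball is added to $urn_1$; (ii) with probability $1-p_{k+1}$, $urn_i$ is chosen with probability $\frac{(1-p)(i+\alpha)F_i(k)}{k(1+\alpha p)+\alpha(1-p)}$ ($1\le i\le k$), and one ball from $urn_i$ is transferred to $urn_{i+1}$. The process is only defined when $0\le p_{k+1}\le1$ at each stage. $E$ denotes expectation over the randomness of the process. *)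

theory Defs
  imports "HOL-Probability.Probability"
begin

text \<open>Configurations: F i = number of balls in urn i (urn indices start at 1).\<close>
type_synonym urn_config = "nat \<Rightarrow> nat"

definition urn_init :: urn_config where
  "urn_init = (\<lambda>i. if i = 1 then 1 else 0)"

definition urn_den :: "real \<Rightarrow> real \<Rightarrow> nat \<Rightarrow> real" where
  "urn_den p \<alpha> k = real k * (1 + \<alpha> * p) + \<alpha> * (1 - p)"

text \<open>p_{k+1} as a function of the configuration F = F(k).\<close>
definition urn_pk :: "real \<Rightarrow> real \<Rightarrow> nat \<Rightarrow> urn_config \<Rightarrow> real" where
  "urn_pk p \<alpha> k F =
     1 - (1 - p) * (\<Sum>i=1..k. (real i + \<alpha>) * real (F i)) / urn_den p \<alpha> k"

text \<open>Probability that urn i is chosen for a transfer at stage k+1.\<close>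
definition urn_w :: "real \<Rightarrow> real \<Rightarrow> nat \<Rightarrow> urn_config \<Rightarrow> nat \<Rightarrow> real" where
  "urn_w p \<alpha> k F i = (1 - p) * (real i + \<alpha>) * real (F i) / urn_den p \<alpha> k"

text \<open>Actions: None = new ball into urn 1; Some i = move a ball from urn i to urn i+1.\<close>
definition urn_apply :: "urn_config \<Rightarrow> nat option \<Rightarrow> urn_config" where
  "urn_apply F a = (case a of
      None \<Rightarrow> F(1 := F 1 + 1)
    | Some i \<Rightarrow> F(i := F i - 1, Suc i := F (Suc i) + 1))"

text \<open>Transition from stage k to stage k+1 (meaningful when 0 <= p_{k+1} <= 1).\<close>
definition urn_step :: "real \<Rightarrow> real \<Rightarrow> nat \<Rightarrow> urn_config \<Rightarrow> urn_config pmf" where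
  "urn_step p \<alpha> k F = map_pmf (urn_apply F)
     (embed_pmf (\<lambda>a. case a of
         None \<Rightarrow> urn_pk p \<alpha> k F
       | Some i \<Rightarrow> (if 1 \<le> i \<and> i \<le> k then urn_w p \<alpha> k F i else 0)))"

text \<open>Distribution of the configuration F(k) after k steps (k >= 1; index 0 is a dummy).\<close>
fun urn_dist :: "real \<Rightarrow> real \<Rightarrow> nat \<Rightarrow> urn_config pmf" where
  "urn_dist p \<alpha> 0 = return_pmf urn_init"
| "urn_dist p \<alpha> (Suc k) =
     (if k = 0 then return_pmf urn_init else urn_dist p \<alpha> k \<bind> urn_step p \<alpha> k)"

fun urn_f :: "real \<Rightarrow> real \<Rightarrow> nat \<Rightarrow> real" where
  "urn_f p \<alpha> 0 = 0"
| "urn_f p \<alpha> (Suc 0) = p / (1 + ((1 - p) / (1 + \<alpha> * p)) * (1 + \<alpha>))"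
| "urn_f p \<alpha> (Suc (Suc j)) =
     (let \<beta> = (1 - p) / (1 + \<alpha> * p) in
       \<beta> * (real (Suc j) + \<alpha>) / (1 + \<beta> * (real (Suc (Suc j)) + \<alpha>)) * urn_f p \<alpha> (Suc j))"

end

theory Submission
  imports Defs
begin

lemma growth_lim:
  fixes u e :: "nat \<Rightarrow> real"
  assumes ev: "eventually (\<lambda>k. \<bar>u (Suc k)\<bar> \<le> \<bar>u k\<bar> + \<bar>e k\<bar>) sequentially"
    and e: "e \<longlonglongrightarrow> 0"
  shows "(\<lambda>k. u k / real k) \<longlonglongrightarrow> 0"
proof (rule LIMSEQ_I)
  fix r :: real assume r: "r > 0"
  have "eventually (\<lambda>k. \<bar>e k\<bar> < r/2) sequentially"
    using LIMSEQ_D[OF e, of "r/2"] r unfolding eventually_sequentially by auto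
  with ev have "eventually (\<lambda>k. \<bar>u (Suc k)\<bar> \<le> \<bar>u k\<bar> + \<bar>e k\<bar> \<and> \<bar>e k\<bar> < r/2) sequentially"
    by (rule eventually_conj)
  then obtain K where K: "\<And>k. k \<ge> K \<Longrightarrow> \<bar>u (Suc k)\<bar> \<le> \<bar>u k\<bar> + \<bar>e k\<bar> \<and> \<bar>e k\<bar> < r/2"
    by (auto simp: eventually_sequentially)
  have bound: "\<bar>u n\<bar> \<le> \<bar>u K\<bar> + real (n - K) * (r/2)" if "n \<ge> K" for n
    using that
  proof (induction n rule: dec_induct)
    case base then show ?case by simp
  next
    case (step n)
    have "\<bar>u (Suc n)\<bar> \<le> \<bar>u n\<bar> + r/2" using K[OF step(1)] by linarith
    also have "\<dots> \<le> \<bar>u K\<bar> + real (n - K) * (r/2) + r/2" using step by linarith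
    also have "\<dots> = \<bar>u K\<bar> + real (Suc n - K) * (r/2)"
      using step(1) by (simp add: Suc_diff_le of_nat_diff field_simps)
    finally show ?case .
  qed
  obtain N :: nat where N: "real N > 2 * \<bar>u K\<bar> / r + real K + 1"
    using reals_Archimedean2 by blast
  show "\<exists>N. \<forall>n\<ge>N. norm (u n / real n - 0) < r"
  proof (intro exI allI impI)
    fix n assume n: "n \<ge> N"
    have "2 * \<bar>u K\<bar> / r \<ge> 0" using r by simp
    moreover have "real N \<le> real n" using n by simp
    ultimately have "real K < real n" using N by linarith
    then have nK: "n \<ge> K" by simp
    have "real N \<le> real n" using n by simp
    have npos: "real n > 0" using \<open>real N \<le> real n\<close> N \<open>2 * \<bar>u K\<bar> / r \<ge> 0\<close> by linarith
    have "\<bar>u n\<bar> \<le> \<bar>u K\<bar> + real n * (r/2)"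
    proof -
      have "real (n - K) * (r/2) \<le> real n * (r/2)"
        using r by (intro mult_right_mono) auto
      then show ?thesis using bound[OF nK] by linarith
    qed
    also have "\<bar>u K\<bar> < real n * (r/2)"
    proof -
      have "2 * \<bar>u K\<bar> / r < real n" using \<open>real N \<le> real n\<close> N by linarith
      then show ?thesis using r by (simp add: field_simps)
    qed
    then have "\<bar>u K\<bar> + real n * (r/2) < real n * r" by linarith
    finally have "\<bar>u n\<bar> < real n * r" .
    then show "norm (u n / real n - 0) < r"
      using npos by (simp add: abs_divide field_simps)
  qed
qed

lemma t1: fixes u x y b e :: "nat \<Rightarrow> real" assumes "real k > 0" "x (Suc k) = x k * (1 - b k / real k) + y k"
 "\<And>k. u k = x k - L * real k" "\<And>k. e k = y k - L - L * b k"
 shows "u (Suc k) = u k * (1 - b k / real k) + e k"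
proof -
  have "L * real k * (b k / real k) = L * b k" using assms(1) by simp
  then show ?thesis using assms(2) unfolding assms(3,4) by (simp add: algebra_simps)
qed
lemma t2: fixes t k :: real assumes "0 < t" "t \<le> k" "k > 0" shows "\<bar>1 - t / k\<bar> \<le> 1"
proof -
  have "t / k \<le> 1" using assms by simp
  moreover have "t / k \<ge> 0" using assms by simp
  ultimately show ?thesis by linarith
qed

lemma lin_rec:
  fixes x b y :: "nat \<Rightarrow> real"
  assumes rec: "\<And>k. k \<ge> K \<Longrightarrow> x (Suc k) = x k * (1 - b k / real k) + y k"
    and b: "b \<longlonglongrightarrow> B" and B: "B > 0" and y: "y \<longlonglongrightarrow> Y"
  shows "(\<lambda>k. x k / real k) \<longlonglongrightarrow> Y / (1 + B)"
proof -
  define L where "L = Y / (1 + B)"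
  define u where "u k = x k - L * real k" for k
  define e where "e k = y k - L - L * b k" for k
  have e: "e \<longlonglongrightarrow> Y - L - L * B"
    unfolding e_def by (intro tendsto_intros y b)
  have "1 + B \<noteq> 0" using B by simp
  then have "L * (1 + B) = Y" by (simp add: L_def)
  then have "Y - L - L * B = 0" by (simp add: algebra_simps)
  with e have e0: "e \<longlonglongrightarrow> 0" by simp
  have ev1: "eventually (\<lambda>k. b k > 0) sequentially"
    using order_tendstoD(1)[OF b B] .
  have ev2: "eventually (\<lambda>k. b k < B + 1) sequentially"
    using order_tendstoD(2)[OF b, of "B+1"] by simp
  obtain M :: nat where M: "real M > B + 1" using reals_Archimedean2 by blast
  have ev3: "eventually (\<lambda>k. k \<ge> max (max K M) 1) sequentially"
    by (rule eventually_ge_at_top)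
  have "eventually (\<lambda>k. \<bar>u (Suc k)\<bar> \<le> \<bar>u k\<bar> + \<bar>e k\<bar>) sequentially"
    using ev1 ev2 ev3
  proof eventually_elim
    case (elim k)
    have kpos: "real k > 0" using elim by simp
    have "M \<le> k" using elim by simp
    then have "real M \<le> real k" by simp
    then have bk: "b k \<le> real k" using elim M by linarith
    have ueq: "u (Suc k) = u k * (1 - b k / real k) + e k"
      by (rule t1[where x=x and y=y and b=b and L=L, OF kpos rec[of k]]) (use elim in \<open>auto simp: u_def e_def\<close>)
    have b1: "\<bar>1 - b k / real k\<bar> \<le> 1"
      by (rule t2) (use bk kpos elim in auto)
    show ?case
    proof -
      have "\<bar>u k * (1 - b k / real k)\<bar> = \<bar>u k\<bar> * \<bar>1 - b k / real k\<bar>" by (rule abs_mult)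
      also have "\<dots> \<le> \<bar>u k\<bar> * 1" by (intro mult_left_mono) (use b1 in auto)
      finally show ?thesis using ueq abs_triangle_ineq[of "u k * (1 - b k / real k)" "e k"] by linarith
    qed
  qed
  from growth_lim[OF this e0] have "(\<lambda>k. u k / real k + L) \<longlonglongrightarrow> 0 + L"
    by (rule tendsto_add) (rule tendsto_const)
  moreover have "eventually (\<lambda>k. u k / real k + L = x k / real k) sequentially"
    using eventually_gt_at_top[of 0] by eventually_elim (simp add: u_def diff_divide_distrib)
  ultimately have "(\<lambda>k. x k / real k) \<longlonglongrightarrow> L"
    by (auto intro: Lim_transform_eventually)
  then show ?thesis by (simp add: L_def)
qed

lemma sum_upd:
  fixes c :: "nat \<Rightarrow> real"
  assumes "finite S" "i \<in> S"
  shows "(\<Sum>j\<in>S. c j * real ((F(i:=x)) j)) = (\<Sum>j\<in>S. c j * real (F j)) + c i * (real x - real (F i))"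
proof -
  have "(\<Sum>j\<in>S. c j * real ((F(i:=x)) j)) = c i * real x + (\<Sum>j\<in>S-{i}. c j * real ((F(i:=x)) j))"
    using assms by (simp add: sum.remove)
  also have "(\<Sum>j\<in>S-{i}. c j * real ((F(i:=x)) j)) = (\<Sum>j\<in>S-{i}. c j * real (F j))"
    by (intro sum.cong) auto
  also have "(\<Sum>j\<in>S. c j * real (F j)) = c i * real (F i) + (\<Sum>j\<in>S-{i}. c j * real (F j))"
    using assms by (simp add: sum.remove)
  ultimately show ?thesis by (simp add: algebra_simps)
qed

locale urnm =
  fixes p \<alpha> :: real
  assumes p0: "0 < p" and p1: "p < 1" and a1: "\<alpha> > -1"
    and wd: "\<And>k F. k \<ge> 1 \<Longrightarrow> F \<in> set_pmf (urn_dist p \<alpha> k) \<Longrightarrow>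
                 0 \<le> urn_pk p \<alpha> k F \<and> urn_pk p \<alpha> k F \<le> 1"
begin

definition AA :: "nat \<Rightarrow> nat option set" where "AA k = insert None (Some ` {1..k})"

definition wt :: "nat \<Rightarrow> urn_config \<Rightarrow> nat option \<Rightarrow> real" where
  "wt k F = (\<lambda>a. case a of
         None \<Rightarrow> urn_pk p \<alpha> k F
       | Some i \<Rightarrow> (if 1 \<le> i \<and> i \<le> k then urn_w p \<alpha> k F i else 0))"

definition valid :: "nat \<Rightarrow> urn_config \<Rightarrow> bool" where
  "valid k F \<longleftrightarrow> F 0 = 0 \<and> (\<forall>j>k. F j = 0) \<and> (\<Sum>j=1..k. real j * real (F j)) = real k"

lemma step_eq: "urn_step p \<alpha> k F = map_pmf (urn_apply F) (embed_pmf (wt k F))"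
  unfolding urn_step_def wt_def by simp

lemma ap_pos: "1 + \<alpha> * p > 0"
proof -
  have "1 + \<alpha> * p = (1 - p) + p * (1 + \<alpha>)" by (simp add: algebra_simps)
  moreover have "p * (1 + \<alpha>) > 0" using p0 a1 by simp
  ultimately show ?thesis using p1 by linarith
qed

lemma den_pos: "k \<ge> 1 \<Longrightarrow> urn_den p \<alpha> k > 0"
proof -
  assume k: "k \<ge> 1"
  have "real k * (1 + \<alpha> * p) \<ge> 1 * (1 + \<alpha> * p)"
    using k ap_pos by (intro mult_right_mono) auto
  then have "urn_den p \<alpha> k \<ge> (1 + \<alpha> * p) + \<alpha> * (1 - p)" unfolding urn_den_def by simp
  also have "(1 + \<alpha> * p) + \<alpha> * (1 - p) = 1 + \<alpha>" by (simp add: algebra_simps)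
  finally show ?thesis using a1 by linarith
qed

lemma w_nonneg: "k \<ge> 1 \<Longrightarrow> i \<ge> 1 \<Longrightarrow> urn_w p \<alpha> k F i \<ge> 0"
  unfolding urn_w_def using den_pos[of k] p1 a1
  by (intro divide_nonneg_pos mult_nonneg_nonneg) auto

lemma w_zero: "F i = 0 \<Longrightarrow> urn_w p \<alpha> k F i = 0"
  unfolding urn_w_def by simp

lemma w_lin: "urn_w p \<alpha> k F i = (1 - p) * (real i + \<alpha>) / urn_den p \<alpha> k * real (F i)"
  unfolding urn_w_def by simp

lemma finite_AA: "finite (AA k)" unfolding AA_def by simp

lemma wt_out: "a \<notin> AA k \<Longrightarrow> wt k F a = 0"
  unfolding AA_def wt_def by (auto split: option.splits)

lemma wt_nonneg: "k \<ge> 1 \<Longrightarrow> urn_pk p \<alpha> k F \<ge> 0 \<Longrightarrow> wt k F a \<ge> 0"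
  unfolding wt_def by (auto split: option.splits intro: w_nonneg)

lemma sum_w: "(\<Sum>i=1..k. urn_w p \<alpha> k F i) = (1 - p) * (\<Sum>i=1..k. (real i + \<alpha>) * real (F i)) / urn_den p \<alpha> k"
  unfolding urn_w_def by (simp add: sum_divide_distrib sum_distrib_left mult.assoc)

lemma sum_wt: "(\<Sum>a\<in>AA k. wt k F a) = 1"
proof -
  have "(\<Sum>a\<in>AA k. wt k F a) = urn_pk p \<alpha> k F + (\<Sum>a\<in>Some ` {1..k}. wt k F a)"
    unfolding AA_def by (subst sum.insert) (auto simp: wt_def)
  also have "(\<Sum>a\<in>Some ` {1..k}. wt k F a) = (\<Sum>i=1..k. urn_w p \<alpha> k F i)"
    by (subst sum.reindex) (auto simp: wt_def)
  finally show ?thesis unfolding sum_w urn_pk_def by simp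
qed

lemma pmf_emb:
  assumes k: "k \<ge> 1" and pk: "urn_pk p \<alpha> k F \<ge> 0"
  shows "pmf (embed_pmf (wt k F)) a = wt k F a"
proof (rule pmf_embed_pmf)
  show "\<And>x. 0 \<le> wt k F x" using wt_nonneg[OF k pk] .
  have "(\<integral>\<^sup>+ x. ennreal (wt k F x) \<partial>count_space UNIV) = (\<Sum>x\<in>AA k. ennreal (wt k F x))"
    by (rule nn_integral_count_space') (auto simp: finite_AA wt_out)
  also have "\<dots> = ennreal (\<Sum>x\<in>AA k. wt k F x)"
    using wt_nonneg[OF k pk] by (simp add: sum_ennreal)
  finally show "(\<integral>\<^sup>+ x. ennreal (wt k F x) \<partial>count_space UNIV) = 1" by (simp add: sum_wt)
qed

lemma set_step:
  assumes k: "k \<ge> 1" and pk: "urn_pk p \<alpha> k F \<ge> 0"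
  shows "set_pmf (urn_step p \<alpha> k F) \<subseteq> urn_apply F ` {a\<in>AA k. wt k F a \<noteq> 0}"
  unfolding step_eq set_map_pmf using wt_out by (auto simp: set_pmf_eq pmf_emb[OF k pk])

lemma finite_step:
  assumes k: "k \<ge> 1" and pk: "urn_pk p \<alpha> k F \<ge> 0"
  shows "finite (set_pmf (urn_step p \<alpha> k F))"
  by (rule finite_subset[OF set_step[OF k pk]]) (simp add: finite_AA)

lemma E_step:
  assumes k: "k \<ge> 1" and pk: "urn_pk p \<alpha> k F \<ge> 0"
  shows "measure_pmf.expectation (urn_step p \<alpha> k F) (h :: urn_config \<Rightarrow> real)
       = (\<Sum>a\<in>AA k. wt k F a * h (urn_apply F a))"
  unfolding step_eq integral_map_pmf
  by (subst integral_measure_pmf[of "AA k"]) (auto simp: finite_AA pmf_emb[OF k pk] set_pmf_eq intro: ccontr dest: wt_out)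

end

context urnm begin

lemma dist_Suc: "k \<ge> 1 \<Longrightarrow> urn_dist p \<alpha> (Suc k) = urn_dist p \<alpha> k \<bind> urn_step p \<alpha> k"
  by simp

lemma dist_1: "urn_dist p \<alpha> 1 = return_pmf urn_init"
  by simp

lemma valid_step:
  assumes k: "k \<ge> 1" and v: "valid k F" and a: "a \<in> AA k" and wa: "wt k F a \<noteq> 0"
  shows "valid (Suc k) (urn_apply F a)"
proof (cases a)
  case None
  have G: "urn_apply F a = F(1 := F 1 + 1)" using None by (simp add: urn_apply_def)
  have s: "(\<Sum>j=1..Suc k. real j * real ((F(1 := F 1 + 1)) j))
        = (\<Sum>j=1..Suc k. real j * real (F j)) + real (1::nat) * (real (F 1 + 1) - real (F 1))"
    by (rule sum_upd) auto
  have "(\<Sum>j=1..Suc k. real j * real (F j)) = real k"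
    using v unfolding valid_def by simp
  with s show ?thesis using v unfolding G valid_def by simp
next
  case (Some i)
  have i: "1 \<le> i" "i \<le> k" using a Some unfolding AA_def by auto
  have "urn_w p \<alpha> k F i \<noteq> 0" using wa Some i by (simp add: wt_def)
  then have "F i \<noteq> 0" using w_zero by metis
  then have Fi: "F i \<ge> 1" by simp
  define F1 where "F1 = F(i := F i - 1)"
  have G: "urn_apply F a = F1(Suc i := F1 (Suc i) + 1)"
    using Some by (simp add: urn_apply_def F1_def)
  have s1: "(\<Sum>j=1..Suc k. real j * real ((F1(Suc i := F1 (Suc i) + 1)) j))
        = (\<Sum>j=1..Suc k. real j * real (F1 j)) + real (Suc i) * (real (F1 (Suc i) + 1) - real (F1 (Suc i)))"
    by (rule sum_upd) (use i in auto)
  have s2: "(\<Sum>j=1..Suc k. real j * real (F1 j))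
        = (\<Sum>j=1..Suc k. real j * real (F j)) + real i * (real (F i - 1) - real (F i))"
    unfolding F1_def by (rule sum_upd) (use i in auto)
  have "(\<Sum>j=1..Suc k. real j * real (F j)) = real k"
    using v unfolding valid_def by simp
  moreover have "real (F i - 1) = real (F i) - 1" using Fi by (simp add: of_nat_diff)
  ultimately have "(\<Sum>j=1..Suc k. real j * real (urn_apply F a j)) = real (Suc k)"
    using s1 s2 unfolding G by (simp add: algebra_simps)
  moreover have "urn_apply F a 0 = 0" "\<forall>j>Suc k. urn_apply F a j = 0"
    using v i unfolding G F1_def valid_def by auto
  ultimately show ?thesis unfolding valid_def by simp
qed

lemma inv: "k \<ge> 1 \<Longrightarrow> finite (set_pmf (urn_dist p \<alpha> k)) \<and> (\<forall>F\<in>set_pmf (urn_dist p \<alpha> k). valid k F)"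
proof (induction k rule: dec_induct)
  case base
  have "valid 1 urn_init" unfolding valid_def urn_init_def by simp
  then show ?case by simp
next
  case (step k)
  have pk: "\<And>F. F \<in> set_pmf (urn_dist p \<alpha> k) \<Longrightarrow> urn_pk p \<alpha> k F \<ge> 0"
    using wd step(1) by blast
  have "finite (set_pmf (urn_dist p \<alpha> (Suc k)))"
    unfolding dist_Suc[OF step(1)] set_bind_pmf
    using step(3) finite_step[OF step(1) pk] by simp
  moreover have "valid (Suc k) G" if G: "G \<in> set_pmf (urn_dist p \<alpha> (Suc k))" for G
  proof -
    obtain F where F: "F \<in> set_pmf (urn_dist p \<alpha> k)" "G \<in> set_pmf (urn_step p \<alpha> k F)"
      using G unfolding dist_Suc[OF step(1)] by auto
    then obtain a where a: "a \<in> AA k" "wt k F a \<noteq> 0" "G = urn_apply F a"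
      using set_step[OF step(1) pk[OF F(1)]] by blast
    have "valid k F" using step(3) F(1) by blast
    then show ?thesis using valid_step[OF step(1) _ a(1,2)] a(3) by simp
  qed
  ultimately show ?case by blast
qed

lemma pk_nonneg: "k \<ge> 1 \<Longrightarrow> F \<in> set_pmf (urn_dist p \<alpha> k) \<Longrightarrow> urn_pk p \<alpha> k F \<ge> 0"
  using wd by blast

abbreviation EE :: "nat \<Rightarrow> (urn_config \<Rightarrow> real) \<Rightarrow> real" where
  "EE k h \<equiv> measure_pmf.expectation (urn_dist p \<alpha> k) h"

lemma EE_sum: "k \<ge> 1 \<Longrightarrow> EE k h = (\<Sum>F\<in>set_pmf (urn_dist p \<alpha> k). pmf (urn_dist p \<alpha> k) F * h F)"
  by (subst integral_measure_pmf[of "set_pmf (urn_dist p \<alpha> k)"]) (use inv in auto)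

lemma E_next:
  assumes k: "k \<ge> 1"
  shows "EE (Suc k) h = EE k (\<lambda>F. \<Sum>a\<in>AA k. wt k F a * h (urn_apply F a))"
proof -
  have "EE (Suc k) h = (\<Sum>F\<in>set_pmf (urn_dist p \<alpha> k). pmf (urn_dist p \<alpha> k) F *\<^sub>R
            measure_pmf.expectation (urn_step p \<alpha> k F) h)"
    unfolding dist_Suc[OF k]
    by (rule pmf_expectation_bind) (use inv[OF k] finite_step[OF k pk_nonneg[OF k]] in auto)
  also have "\<dots> = (\<Sum>F\<in>set_pmf (urn_dist p \<alpha> k). pmf (urn_dist p \<alpha> k) F *
            (\<Sum>a\<in>AA k. wt k F a * h (urn_apply F a)))"
    by (intro sum.cong refl) (simp add: E_step[OF k pk_nonneg[OF k]])
  also have "\<dots> = EE k (\<lambda>F. \<Sum>a\<in>AA k. wt k F a * h (urn_apply F a))"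
    by (rule EE_sum[OF k, symmetric])
  finally show ?thesis .
qed

lemma EE_cong:
  assumes k: "k \<ge> 1" and eq: "\<And>F. F \<in> set_pmf (urn_dist p \<alpha> k) \<Longrightarrow> g F = h F"
  shows "EE k g = EE k h"
  unfolding EE_sum[OF k] by (intro sum.cong refl) (simp add: eq)

lemma EE_lin:
  assumes k: "k \<ge> 1"
  shows "EE k (\<lambda>F. c + d * g F) = c + d * EE k g"
proof -
  let ?S = "set_pmf (urn_dist p \<alpha> k)"
  have s1: "(\<Sum>F\<in>?S. pmf (urn_dist p \<alpha> k) F) = 1"
    by (rule sum_pmf_eq_1) (use inv[OF k] in auto)
  have "EE k (\<lambda>F. c + d * g F) = (\<Sum>F\<in>?S. pmf (urn_dist p \<alpha> k) F * c)
      + d * (\<Sum>F\<in>?S. pmf (urn_dist p \<alpha> k) F * g F)"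
    unfolding EE_sum[OF k] by (simp add: sum.distrib sum_distrib_left algebra_simps)
  also have "(\<Sum>F\<in>?S. pmf (urn_dist p \<alpha> k) F * c) = c"
    using s1 by (simp add: sum_distrib_right[symmetric])
  finally show ?thesis unfolding EE_sum[OF k] .
qed

end

lemma shift_sum:
  fixes g :: "nat \<Rightarrow> real"
  shows "(\<Sum>j=1..Suc k. (if 2 \<le> j then g (j - 1) else 0)) = (\<Sum>j=1..k. g j)"
  by (induction k) auto

context urnm begin

definition NN :: "nat \<Rightarrow> urn_config \<Rightarrow> real" where
  "NN k F = (\<Sum>j=1..k. real (F j))"

lemma w_big: "valid k F \<Longrightarrow> j > k \<Longrightarrow> urn_w p \<alpha> k F j = 0"
  unfolding valid_def by (intro w_zero) auto

lemma pk_w: "urn_pk p \<alpha> k F + (\<Sum>i=1..k. urn_w p \<alpha> k F i) = 1"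
  unfolding sum_w urn_pk_def by simp

lemma term_j:
  assumes "1 \<le> j"
  shows "urn_w p \<alpha> k F j * real (urn_apply F (Some j) i)
     = urn_w p \<alpha> k F j * real (F i) - (if j = i then urn_w p \<alpha> k F j else 0)
       + (if j = i - 1 \<and> i \<ge> 1 then urn_w p \<alpha> k F j else 0)"
proof (cases "F j = 0")
  case True
  then have wj: "urn_w p \<alpha> k F j = 0" by (rule w_zero)
  then show ?thesis by (cases "j = i"; cases "j = i - 1") auto
next
  case False
  then have Fj: "real (F j - 1) = real (F j) - 1" by (simp add: of_nat_diff)
  show ?thesis
  proof (cases "i = Suc j")
    case True
    then show ?thesis by (simp add: urn_apply_def algebra_simps)
  next
    case ns: False
    show ?thesis
    proof (cases "i = j")
      case True
      then show ?thesis using Fj assms by (simp add: urn_apply_def algebra_simps)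
    next
      case False
      then have "j \<noteq> i - 1 \<or> i = 0" using ns by auto
      then show ?thesis using False ns by (auto simp add: urn_apply_def)
    qed
  qed
qed

lemma step_i:
  assumes k: "k \<ge> 1" and v: "valid k F" and i: "i \<ge> 1"
  shows "(\<Sum>a\<in>AA k. wt k F a * real (urn_apply F a i))
     = real (F i) + (if i = 1 then urn_pk p \<alpha> k F else 0)
       + (if i \<ge> 2 then urn_w p \<alpha> k F (i - 1) else 0) - urn_w p \<alpha> k F i"
proof -
  let ?w = "urn_w p \<alpha> k F"
  have "(\<Sum>a\<in>AA k. wt k F a * real (urn_apply F a i))
      = urn_pk p \<alpha> k F * real (urn_apply F None i) + (\<Sum>a\<in>Some ` {1..k}. wt k F a * real (urn_apply F a i))"
    unfolding AA_def by (subst sum.insert) (auto simp: wt_def)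
  also have "(\<Sum>a\<in>Some ` {1..k}. wt k F a * real (urn_apply F a i))
      = (\<Sum>j=1..k. ?w j * real (urn_apply F (Some j) i))"
    by (subst sum.reindex) (auto simp: wt_def)
  also have "\<dots> = (\<Sum>j=1..k. ?w j * real (F i) - (if j = i then ?w j else 0)
       + (if j = i - 1 \<and> i \<ge> 1 then ?w j else 0))"
    by (intro sum.cong refl term_j) auto
  also have "\<dots> = (\<Sum>j=1..k. ?w j) * real (F i) - (\<Sum>j=1..k. (if j = i then ?w j else 0))
       + (\<Sum>j=1..k. (if j = i - 1 then ?w j else 0))"
    using i by (simp add: sum.distrib sum_subtractf sum_distrib_right)
  also have "(\<Sum>j=1..k. (if j = i then ?w j else 0)) = ?w i"
    using w_big[OF v, of i] i by (auto simp add: sum.delta not_le)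
  also have "(\<Sum>j=1..k. (if j = i - 1 then ?w j else 0)) = (if i \<ge> 2 then ?w (i - 1) else 0)"
    using w_big[OF v, of "i - 1"] i by (auto simp add: sum.delta)
  also have "real (urn_apply F None i) = real (F i) + (if i = 1 then 1 else 0)"
    by (simp add: urn_apply_def)
  moreover have "real (F i) * urn_pk p \<alpha> k F + real (F i) * (\<Sum>j=1..k. ?w j) = real (F i)"
    using pk_w[of k F] by (metis distrib_left mult.right_neutral)
  ultimately show ?thesis by (cases "i = 1") (simp_all add: algebra_simps)
qed

lemma step_N:
  assumes k: "k \<ge> 1" and v: "valid k F"
  shows "(\<Sum>a\<in>AA k. wt k F a * NN (Suc k) (urn_apply F a)) = NN k F + urn_pk p \<alpha> k F"
proof -
  let ?w = "urn_w p \<alpha> k F"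
  have "(\<Sum>a\<in>AA k. wt k F a * NN (Suc k) (urn_apply F a))
      = (\<Sum>j=1..Suc k. (\<Sum>a\<in>AA k. wt k F a * real (urn_apply F a j)))"
    unfolding NN_def sum_distrib_left by (rule sum.swap)
  also have "\<dots> = (\<Sum>j=1..Suc k. real (F j) + (if j = 1 then urn_pk p \<alpha> k F else 0)
       + (if j \<ge> 2 then ?w (j - 1) else 0) - ?w j)"
    by (intro sum.cong refl step_i[OF k v]) auto
  also have "\<dots> = (\<Sum>j=1..Suc k. real (F j)) + urn_pk p \<alpha> k F
       + (\<Sum>j=1..Suc k. (if j \<ge> 2 then ?w (j - 1) else 0)) - (\<Sum>j=1..Suc k. ?w j)"
    by (simp add: sum.distrib sum_subtractf)
  also have "(\<Sum>j=1..Suc k. (if j \<ge> 2 then ?w (j - 1) else 0)) = (\<Sum>j=1..k. ?w j)"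
    by (rule shift_sum)
  also have "(\<Sum>j=1..Suc k. ?w j) = (\<Sum>j=1..k. ?w j)"
    using w_big[OF v, of "Suc k"] by simp
  also have "(\<Sum>j=1..Suc k. real (F j)) = NN k F"
    using v unfolding valid_def NN_def by simp
  finally show ?thesis by simp
qed

lemma pk_valid:
  assumes v: "valid k F"
  shows "urn_pk p \<alpha> k F = 1 - (1 - p) * (real k + \<alpha> * NN k F) / urn_den p \<alpha> k"
proof -
  have "(\<Sum>i=1..k. (real i + \<alpha>) * real (F i)) = (\<Sum>i=1..k. real i * real (F i)) + \<alpha> * NN k F"
    unfolding NN_def by (simp add: distrib_right sum.distrib sum_distrib_left)
  also have "(\<Sum>i=1..k. real i * real (F i)) = real k" using v unfolding valid_def by simp
  finally show ?thesis unfolding urn_pk_def by simp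
qed

end

context urnm begin

lemma EE_add: "k \<ge> 1 \<Longrightarrow> EE k (\<lambda>F. g F + h F) = EE k g + EE k h"
  by (simp add: EE_sum sum.distrib distrib_left)

lemma EE_cmult: "k \<ge> 1 \<Longrightarrow> EE k (\<lambda>F. d * g F) = d * EE k g"
  using EE_lin[of k 0 d g] by simp

lemma valid_dist: "k \<ge> 1 \<Longrightarrow> F \<in> set_pmf (urn_dist p \<alpha> k) \<Longrightarrow> valid k F"
  using inv by blast

lemma n_rec:
  assumes k: "k \<ge> 1"
  shows "EE (Suc k) (NN (Suc k)) = EE k (NN k) + EE k (urn_pk p \<alpha> k)"
proof -
  have "EE (Suc k) (NN (Suc k)) = EE k (\<lambda>F. NN k F + urn_pk p \<alpha> k F)"
    unfolding E_next[OF k] by (rule EE_cong[OF k]) (simp add: step_N[OF k valid_dist[OF k]])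
  then show ?thesis by (simp add: EE_add[OF k])
qed

lemma Epk:
  assumes k: "k \<ge> 1"
  shows "EE k (urn_pk p \<alpha> k) = 1 - (1 - p) * (real k + \<alpha> * EE k (NN k)) / urn_den p \<alpha> k"
proof -
  have d: "urn_den p \<alpha> k \<noteq> 0" using den_pos[OF k] by simp
  have "EE k (urn_pk p \<alpha> k) = EE k (\<lambda>F. (1 - (1 - p) * real k / urn_den p \<alpha> k)
             + (- (1 - p) * \<alpha> / urn_den p \<alpha> k) * NN k F)"
    by (rule EE_cong[OF k]) (use d in \<open>simp add: pk_valid[OF valid_dist[OF k]] field_simps\<close>)
  also have "\<dots> = 1 - (1 - p) * (real k + \<alpha> * EE k (NN k)) / urn_den p \<alpha> k"
    unfolding EE_lin[OF k] using d by (simp add: field_simps)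
  finally show ?thesis .
qed

lemma n_val: "k \<ge> 1 \<Longrightarrow> EE k (NN k) = p * real k + 1 - p"
proof (induction k rule: dec_induct)
  case base
  show ?case by (simp add: NN_def urn_init_def)
next
  case (step k)
  have d: "urn_den p \<alpha> k \<noteq> 0" using den_pos[OF step(1)] by simp
  have e: "real k + \<alpha> * (p * real k + 1 - p) = urn_den p \<alpha> k"
    unfolding urn_den_def by (simp add: algebra_simps)
  show ?case
    unfolding n_rec[OF step(1)] Epk[OF step(1)] step(3) e using d by (simp add: field_simps)
qed

lemma Epk_p: "k \<ge> 1 \<Longrightarrow> EE k (urn_pk p \<alpha> k) = p"
proof -
  assume k: "k \<ge> 1"
  have d: "urn_den p \<alpha> k \<noteq> 0" using den_pos[OF k] by simp
  have e: "real k + \<alpha> * (p * real k + 1 - p) = urn_den p \<alpha> k"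
    unfolding urn_den_def by (simp add: algebra_simps)
  show ?thesis unfolding Epk[OF k] n_val[OF k] e using d by (simp add: diff_divide_distrib)
qed

lemma e_rec1:
  assumes k: "k \<ge> 1"
  shows "EE (Suc k) (\<lambda>F. real (F 1)) = EE k (\<lambda>F. real (F 1)) * (1 - (1 - p) * (1 + \<alpha>) / urn_den p \<alpha> k) + p"
proof -
  have "EE (Suc k) (\<lambda>F. real (F 1)) = EE k (\<lambda>F. urn_pk p \<alpha> k F + (1 - (1 - p) * (1 + \<alpha>) / urn_den p \<alpha> k) * real (F 1))"
    unfolding E_next[OF k]
  proof (rule EE_cong[OF k])
    fix F assume F: "F \<in> set_pmf (urn_dist p \<alpha> k)"
    have i1: "(1::nat) \<ge> 1" by simp
    show "(\<Sum>a\<in>AA k. wt k F a * real (urn_apply F a 1)) = urn_pk p \<alpha> k F + (1 - (1 - p) * (1 + \<alpha>) / urn_den p \<alpha> k) * real (F 1)"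
      unfolding step_i[OF k valid_dist[OF k F] i1] w_lin by (simp add: algebra_simps)
  qed
  also have "\<dots> = p + (1 - (1 - p) * (1 + \<alpha>) / urn_den p \<alpha> k) * EE k (\<lambda>F. real (F 1))"
    by (simp add: EE_add[OF k] EE_cmult[OF k] Epk_p[OF k])
  finally show ?thesis by simp
qed

lemma e_rec2:
  assumes k: "k \<ge> 1" and i: "i \<ge> 2"
  shows "EE (Suc k) (\<lambda>F. real (F i)) = EE k (\<lambda>F. real (F i)) * (1 - (1 - p) * (real i + \<alpha>) / urn_den p \<alpha> k)
     + (1 - p) * (real (i - 1) + \<alpha>) / urn_den p \<alpha> k * EE k (\<lambda>F. real (F (i - 1)))"
proof -
  have "EE (Suc k) (\<lambda>F. real (F i)) = EE k (\<lambda>F. (1 - (1 - p) * (real i + \<alpha>) / urn_den p \<alpha> k) * real (F i)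
      + (1 - p) * (real (i - 1) + \<alpha>) / urn_den p \<alpha> k * real (F (i - 1)))"
    unfolding E_next[OF k]
  proof (rule EE_cong[OF k])
    fix F assume F: "F \<in> set_pmf (urn_dist p \<alpha> k)"
    have i1: "i \<ge> 1" using i by simp
    show "(\<Sum>a\<in>AA k. wt k F a * real (urn_apply F a i)) = (1 - (1 - p) * (real i + \<alpha>) / urn_den p \<alpha> k) * real (F i)
      + (1 - p) * (real (i - 1) + \<alpha>) / urn_den p \<alpha> k * real (F (i - 1))"
      unfolding step_i[OF k valid_dist[OF k F] i1] w_lin using i by (simp add: algebra_simps)
  qed
  also have "\<dots> = (1 - (1 - p) * (real i + \<alpha>) / urn_den p \<alpha> k) * EE k (\<lambda>F. real (F i))
      + (1 - p) * (real (i - 1) + \<alpha>) / urn_den p \<alpha> k * EE k (\<lambda>F. real (F (i - 1)))"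
    by (simp add: EE_add[OF k] EE_cmult[OF k])
  finally show ?thesis by simp
qed

lemma kden: "(\<lambda>k. real k / urn_den p \<alpha> k) \<longlonglongrightarrow> 1 / (1 + \<alpha> * p)"
proof -
  have "(\<lambda>k. 1 / ((1 + \<alpha> * p) + \<alpha> * (1 - p) / real k)) \<longlonglongrightarrow> 1 / ((1 + \<alpha> * p) + 0)"
    by (intro tendsto_intros) (use ap_pos in auto)
  moreover have "eventually (\<lambda>k. 1 / ((1 + \<alpha> * p) + \<alpha> * (1 - p) / real k) = real k / urn_den p \<alpha> k) sequentially"
    using eventually_gt_at_top[of 0]
  proof eventually_elim
    case (elim k)
    then have "urn_den p \<alpha> k / real k = (1 + \<alpha> * p) + \<alpha> * (1 - p) / real k"
      unfolding urn_den_def by (simp add: add_divide_distrib)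
    then show ?case by (metis divide_divide_eq_right div_by_1 mult_1)
  qed
  ultimately show ?thesis by (auto intro: Lim_transform_eventually)
qed

lemma bseq_lim: "(\<lambda>k. c * (real k / urn_den p \<alpha> k)) \<longlonglongrightarrow> c * (1 / (1 + \<alpha> * p))"
  by (intro tendsto_mult tendsto_const kden)

lemma bseq_div: "k \<ge> 1 \<Longrightarrow> c * (real k / urn_den p \<alpha> k) / real k = c / urn_den p \<alpha> k"
  by simp

lemma main: "(\<lambda>k. EE k (\<lambda>F. real (F (Suc j))) / real k) \<longlonglongrightarrow> urn_f p \<alpha> (Suc j)"
proof (induction j)
  case 0
  define c where "c = (1 - p) * (1 + \<alpha>)"
  have B: "c * (1 / (1 + \<alpha> * p)) > 0" unfolding c_def using p1 a1 ap_pos by simp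
  have L: "(\<lambda>k. EE k (\<lambda>F. real (F 1)) / real k) \<longlonglongrightarrow> p / (1 + c * (1 / (1 + \<alpha> * p)))"
  proof (rule lin_rec[where K=1, OF _ bseq_lim B tendsto_const])
    fix k :: nat assume k: "k \<ge> 1"
    show "EE (Suc k) (\<lambda>F. real (F 1)) = EE k (\<lambda>F. real (F 1)) * (1 - c * (real k / urn_den p \<alpha> k) / real k) + p"
      unfolding bseq_div[OF k] e_rec1[OF k] c_def ..
  qed
  have eq: "p / (1 + c * (1 / (1 + \<alpha> * p))) = urn_f p \<alpha> (Suc 0)"
    by (simp add: c_def)
  from L[unfolded eq] show ?case by (simp only: One_nat_def)
next
  case (Suc j)
  define c where "c = (1 - p) * (real (Suc (Suc j)) + \<alpha>)"
  define c' where "c' = (1 - p) * (real (Suc j) + \<alpha>)"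
  define f where "f = urn_f p \<alpha> (Suc j)"
  have c_pos: "c > 0" unfolding c_def using p1 a1 by simp
  have B: "c * (1 / (1 + \<alpha> * p)) > 0" using c_pos ap_pos by simp
  have y1: "(\<lambda>k. c' * (EE k (\<lambda>F. real (F (Suc j))) / real k) * (real k / urn_den p \<alpha> k))
      \<longlonglongrightarrow> c' * f * (1 / (1 + \<alpha> * p))"
    unfolding f_def by (intro tendsto_mult tendsto_const kden Suc.IH)
  have y2: "eventually (\<lambda>k. c' * (EE k (\<lambda>F. real (F (Suc j))) / real k) * (real k / urn_den p \<alpha> k)
      = c' / urn_den p \<alpha> k * EE k (\<lambda>F. real (F (Suc j)))) sequentially"
    using eventually_gt_at_top[of 0] by eventually_elim simp
  have y: "(\<lambda>k. c' / urn_den p \<alpha> k * EE k (\<lambda>F. real (F (Suc j)))) \<longlonglongrightarrow> c' * f * (1 / (1 + \<alpha> * p))"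
    using Lim_transform_eventually[OF y1 y2] .
  have "(\<lambda>k. EE k (\<lambda>F. real (F (Suc (Suc j)))) / real k)
      \<longlonglongrightarrow> (c' * f * (1 / (1 + \<alpha> * p))) / (1 + c * (1 / (1 + \<alpha> * p)))"
  proof (rule lin_rec[where K=1, OF _ bseq_lim B y])
    fix k :: nat assume k: "k \<ge> 1"
    show "EE (Suc k) (\<lambda>F. real (F (Suc (Suc j)))) = EE k (\<lambda>F. real (F (Suc (Suc j))))
       * (1 - c * (real k / urn_den p \<alpha> k) / real k) + c' / urn_den p \<alpha> k * EE k (\<lambda>F. real (F (Suc j)))"
      unfolding bseq_div[OF k] c_def c'_def using e_rec2[OF k, of "Suc (Suc j)"] by simp
  qed
  moreover have "(c' * f * (1 / (1 + \<alpha> * p))) / (1 + c * (1 / (1 + \<alpha> * p))) = urn_f p \<alpha> (Suc (Suc j))"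
  proof -
    define \<beta> where "\<beta> = (1 - p) / (1 + \<alpha> * p)"
    have 1: "c' * f * (1 / (1 + \<alpha> * p)) = \<beta> * (real (Suc j) + \<alpha>) * f"
      unfolding \<beta>_def c'_def by simp
    have 2: "c * (1 / (1 + \<alpha> * p)) = \<beta> * (real (Suc (Suc j)) + \<alpha>)"
      unfolding \<beta>_def c_def by simp
    show ?thesis unfolding 1 2 unfolding f_def by (simp add: \<beta>_def Let_def del: of_nat_Suc)
  qed
  ultimately show ?case by simp
qed

end

theorem theoremA4:
  fixes p \<alpha> :: real
  assumes "0 < p" "p < 1" "\<alpha> > -1"
    and well_defined: "\<And>k F. k \<ge> 1 \<Longrightarrow> F \<in> set_pmf (urn_dist p \<alpha> k) \<Longrightarrow>
                 0 \<le> urn_pk p \<alpha> k F \<and> urn_pk p \<alpha> k F \<le> 1"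
  shows "\<forall>i\<ge>1. (\<lambda>k. measure_pmf.expectation (urn_dist p \<alpha> k) (\<lambda>F. real (F i)) / real k)
                \<longlonglongrightarrow> urn_f p \<alpha> i"
proof -
  interpret urnm p \<alpha>
    by unfold_locales (use assms in auto)
  show ?thesis
  proof (intro allI impI)
    fix i :: nat assume "i \<ge> 1"
    then obtain j where ij: "i = Suc j" by (cases i) auto
    show "(\<lambda>k. measure_pmf.expectation (urn_dist p \<alpha> k) (\<lambda>F. real (F i)) / real k)
                \<longlonglongrightarrow> urn_f p \<alpha> i"
      unfolding ij by (rule main)
  qed
qed

end
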